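(* Let $M\in(0,1)$ and $V_1,V_2\in(0,M-M^2)$ with $V_1\neq V_2$. (1) The equation $F_{M,V_1}(x)=F_{M,V_2}(x)$ has exactly one solution $x_c$ in $(0,1)$. (2) If $V_1<V_2$, then $F_{M,V_1}(x)<F_{M,V_2}(x)$ for all $x\in(0,x_c)$ and $F_{M,V_2}(x)<F_{M,V_1}(x)$ for all $x\in(x_c,1)$.
   Context: For $(M,V)$ with $M\in(0,1)$, $0<V<M-M^2$, $F_{M,V}$ is the distribution function of the Beta$(\alpha,\beta)$ law (density $x^{\alpha-1}(1-x)^{\beta-1}/B(\alpha,\beta)$ on $(0,1)$) with $\alpha=\frac{M(M-M^2-V)}{V}$, $\beta=\frac{(1-M)(M-M^2-V)}{V}$, i.e. the Beta law with mean $M$ and variance $V$. *)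

theory Defs
  imports "HOL-Analysis.Analysis"
begin

definition beta_density :: "real \<Rightarrow> real \<Rightarrow> real \<Rightarrow> real" where
  "beta_density a b t =
     (if 0 < t \<and> t < 1 then t powr (a - 1) * (1 - t) powr (b - 1) / Beta a b else 0)"

definition beta_cdf :: "real \<Rightarrow> real \<Rightarrow> real \<Rightarrow> real" where
  "beta_cdf a b x = (LINT t:{..x}|lborel. beta_density a b t)"

text \<open>Parameters of the Beta law with mean M and variance V.\<close>
definition beta_alpha :: "real \<Rightarrow> real \<Rightarrow> real" where
  "beta_alpha M V = M * (M - M\<^sup>2 - V) / V"

definition beta_beta :: "real \<Rightarrow> real \<Rightarrow> real" where
  "beta_beta M V = (1 - M) * (M - M\<^sup>2 - V) / V"

definition F_MV :: "real \<Rightarrow> real \<Rightarrow> real \<Rightarrow> real" where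
  "F_MV M V x = beta_cdf (beta_alpha M V) (beta_beta M V) x"

end

theory Submission
  imports Defs
begin


lemma Beta_pos_real: "(a::real) > 0 \<Longrightarrow> b > 0 \<Longrightarrow> Beta a b > 0"
  unfolding Beta_def by (simp add: Gamma_real_pos)

lemma dens_eq:
  assumes "t \<in> {0..1}"
  shows "beta_density a b t = t powr (a - 1) * (1 - t) powr (b - 1) / Beta a b"
  using assms unfolding beta_density_def by auto

lemma dens_nonneg: "a > 0 \<Longrightarrow> b > 0 \<Longrightarrow> beta_density a b t \<ge> 0"
  unfolding beta_density_def using Beta_pos_real[of a b] by auto

lemma dens_int:
  assumes "a > 0" "b > 0"
  shows "(beta_density a b has_integral 1) {0..1}"
proof -
  have "((\<lambda>t. t powr (a - 1) * (1 - t) powr (b - 1) / Beta a b) has_integral Beta a b / Beta a b) {0..1}"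
    using has_integral_Beta_real[OF assms] by (rule has_integral_divide)
  then have "((\<lambda>t. t powr (a - 1) * (1 - t) powr (b - 1) / Beta a b) has_integral 1) {0..1}"
    using Beta_pos_real[OF assms] by simp
  then show ?thesis
    by (rule has_integral_eq[rotated]) (simp add: dens_eq)
qed

lemma cdf_eq:
  assumes "a > 0" "b > 0" "0 \<le> x" "x \<le> 1"
  shows "beta_cdf a b x = integral {0..x} (beta_density a b)"
proof -
  let ?f = "beta_density a b"
  have i01: "?f integrable_on {0..1}" using dens_int[OF assms(1,2)] by blast
  have i0x: "?f integrable_on {0..x}"
    by (rule integrable_on_subinterval[OF i01]) (use assms in auto)
  have eqf: "(\<lambda>t. if t \<in> {..x} then ?f t else 0) = (\<lambda>t. if t \<in> {0..x} then ?f t else 0)"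
    by (rule ext) (auto simp: beta_density_def)
  have "?f integrable_on {..x}"
    using i0x by (subst integrable_restrict_UNIV[symmetric], subst eqf, subst integrable_restrict_UNIV)
  then have "?f absolutely_integrable_on {..x}"
    by (rule nonnegative_absolutely_integrable_1) (use dens_nonneg assms in auto)
  then have "set_integrable lborel {..x} ?f"
  proof -
    assume A: "?f absolutely_integrable_on {..x}"
    have meas: "(\<lambda>t. indicator {..x} t *\<^sub>R ?f t) \<in> borel_measurable lborel"
      unfolding beta_density_def by measurable
    show ?thesis using A integrable_completion[OF meas] unfolding set_integrable_def by simp
  qed
  then have "beta_cdf a b x = integral {..x} ?f"
    unfolding beta_cdf_def by (rule set_borel_integral_eq_integral(2))
  also have "\<dots> = integral {0..x} ?f"
    by (subst integral_restrict_UNIV[symmetric], subst eqf, subst integral_restrict_UNIV) simp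
  finally show ?thesis .
qed

lemma cdf_one:
  assumes "a > 0" "b > 0"
  shows "beta_cdf a b 1 = 1"
  using cdf_eq[OF assms, of 1] dens_int[OF assms] by (simp add: integral_unique)



lemma integral_pos_strict:
  fixes g :: "real \<Rightarrow> real"
  assumes int: "g integrable_on {c..d}" and nn: "\<forall>t\<in>{c..d}. g t \<ge> 0"
    and sub: "c \<le> c'" "c' < d'" "d' \<le> d"
    and cont: "continuous_on {c'..d'} g" and pos: "\<forall>t\<in>{c'..d'}. g t > 0"
  shows "integral {c..d} g > 0"
proof -
  obtain x0 where x0: "x0 \<in> {c'..d'}" "\<forall>y\<in>{c'..d'}. g x0 \<le> g y"
    using continuous_attains_inf[OF compact_Icc _ cont] sub by auto
  have i1: "g integrable_on {c..c'}" by (rule integrable_on_subinterval[OF int]) (use sub in auto)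
  have i2: "g integrable_on {c'..d}" by (rule integrable_on_subinterval[OF int]) (use sub in auto)
  have i3: "g integrable_on {c'..d'}" by (rule integrable_on_subinterval[OF int]) (use sub in auto)
  have i4: "g integrable_on {d'..d}" by (rule integrable_on_subinterval[OF int]) (use sub in auto)
  have e1: "integral {c..c'} g + integral {c'..d} g = integral {c..d} g"
    using Henstock_Kurzweil_Integration.integral_combine[where f=g and a=c and c=c' and b=d] sub int by auto
  have e2: "integral {c'..d'} g + integral {d'..d} g = integral {c'..d} g"
    using Henstock_Kurzweil_Integration.integral_combine[where f=g and a=c' and c=d' and b=d] sub i2 by auto
  have n1: "integral {c..c'} g \<ge> 0" by (rule integral_nonneg[OF i1]) (use nn sub in auto)
  have n2: "integral {d'..d} g \<ge> 0" by (rule integral_nonneg[OF i4]) (use nn sub in auto)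
  have "integral {c'..d'} (\<lambda>_. g x0) \<le> integral {c'..d'} g"
    by (rule integral_le) (use i3 x0 in auto)
  moreover have "integral {c'..d'} (\<lambda>_. g x0) = (d' - c') * g x0" using sub by simp
  moreover have "(d' - c') * g x0 > 0" using sub pos x0 by simp
  ultimately have "integral {c'..d'} g > 0" by linarith
  then show ?thesis using e1 e2 n1 n2 by linarith
qed

lemma integral_neg_strict:
  fixes g :: "real \<Rightarrow> real"
  assumes int: "g integrable_on {c..d}" and nn: "\<forall>t\<in>{c..d}. g t \<le> 0"
    and sub: "c \<le> c'" "c' < d'" "d' \<le> d"
    and cont: "continuous_on {c'..d'} g" and pos: "\<forall>t\<in>{c'..d'}. g t < 0"
  shows "integral {c..d} g < 0"
proof -
  have "integral {c..d} (\<lambda>t. - g t) > 0"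
    by (rule integral_pos_strict[OF _ _ sub]) (use int nn cont pos in \<open>auto intro: integrable_neg continuous_intros\<close>)
  then show ?thesis using integral_neg[where f=g and S="{c..d}"] int by simp
qed

definition psi :: "real \<Rightarrow> real \<Rightarrow> real \<Rightarrow> real" where
  "psi da db t = t powr da * (1 - t) powr db"

lemma psi_ln:
  assumes "0 < t" "t < 1"
  shows "psi da db t = exp (da * ln t + db * ln (1 - t))"
  using assms unfolding psi_def powr_def by (simp add: exp_add)

lemma L_deriv:
  assumes "0 < x" "x < 1"
  shows "((\<lambda>t. da * ln t + db * ln (1 - t)) has_real_derivative (da / x - db / (1 - x))) (at x)"
  using assms by (auto intro!: derivative_eq_intros simp: field_simps)

lemma L_cont:
  fixes t u da db :: real
  assumes "0 < t" "u < 1"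
  shows "continuous_on {t..u} (\<lambda>t. da * ln t + db * ln (1 - t))"
proof (intro continuous_at_imp_continuous_on ballI)
  fix x :: real assume "x \<in> {t..u}"
  then show "isCont (\<lambda>t. da * ln t + db * ln (1 - t)) x"
    using L_deriv[of x da db] assms by (intro DERIV_isCont) auto
qed

lemma psi_inc:
  assumes "da > 0" "db > 0" "0 \<le> t" "t < u" "u \<le> da / (da + db)"
  shows "psi da db t < psi da db u"
proof -
  have m1: "da / (da + db) < 1" using assms by simp
  show ?thesis
  proof (cases "t = 0")
    case True
    then show ?thesis using assms m1 unfolding psi_def by (auto intro!: mult_pos_pos)
  next
    case False
    then have t0: "t > 0" using assms by simp
    have "da * ln t + db * ln (1 - t) < da * ln u + db * ln (1 - u)"
    proof (rule DERIV_pos_imp_increasing_open[OF \<open>t < u\<close>])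
      fix x assume x: "t < x" "x < u"
      have "x * (da + db) < u * (da + db)" using x assms by (intro mult_strict_right_mono) auto
      moreover have "u * (da + db) \<le> da" using assms(5) assms(1,2) by (simp add: field_simps)
      ultimately have "x * (da + db) < da" by linarith
      have x01: "0 < x" "x < 1" using x t0 assms(5) m1 by linarith+
      have "da / x - db / (1 - x) = (da * (1 - x) - db * x) / (x * (1 - x))" using x01 by (simp add: field_simps)
      moreover have "(da * (1 - x) - db * x) / (x * (1 - x)) > 0"
        using x01 \<open>x * (da + db) < da\<close> by (intro divide_pos_pos) (auto simp: algebra_simps)
      ultimately have "da / x - db / (1 - x) > 0" by simp
      then show "\<exists>y. ((\<lambda>t. da * ln t + db * ln (1 - t)) has_real_derivative y) (at x) \<and> y > 0"
        using L_deriv[of x da db] x t0 assms m1 by auto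
    next
      show "continuous_on {t..u} (\<lambda>t. da * ln t + db * ln (1 - t))"
      proof -
        have "u < 1" using assms(5) m1 by linarith
        then show ?thesis using L_cont[OF t0] by blast
      qed
    qed
    moreover have "u < 1" "t < 1" "u > 0" using assms(4,5) m1 t0 by linarith+
    ultimately show ?thesis using psi_ln[of t da db] psi_ln[of u da db] t0 by simp
  qed
qed

lemma psi_dec:
  assumes "da > 0" "db > 0" "da / (da + db) \<le> t" "t < u" "u \<le> 1"
  shows "psi da db u < psi da db t"
proof -
  have m0: "da / (da + db) > 0" using assms by simp
  show ?thesis
  proof (cases "u = 1")
    case True
    have "t > 0" using assms m0 by linarith
    then show ?thesis using True assms unfolding psi_def by (auto intro!: mult_pos_pos)
  next
    case False
    then have u1: "u < 1" using assms by simp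
    have "da * ln u + db * ln (1 - u) < da * ln t + db * ln (1 - t)"
    proof (rule DERIV_neg_imp_decreasing_open[OF \<open>t < u\<close>])
      fix x assume x: "t < x" "x < u"
      have "x * (da + db) > t * (da + db)" using x assms by (intro mult_strict_right_mono) auto
      moreover have "t * (da + db) \<ge> da" using assms(3) assms(1,2) by (simp add: field_simps)
      ultimately have "x * (da + db) > da" by linarith
      have x01: "0 < x" "x < 1" using x u1 assms(3) m0 by linarith+
      have "da / x - db / (1 - x) = (da * (1 - x) - db * x) / (x * (1 - x))" using x01 by (simp add: field_simps)
      moreover have "(da * (1 - x) - db * x) / (x * (1 - x)) < 0"
        using x01 \<open>x * (da + db) > da\<close> by (intro divide_neg_pos) (auto simp: algebra_simps)
      ultimately have "da / x - db / (1 - x) < 0" by simp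
      then show "\<exists>y. ((\<lambda>t. da * ln t + db * ln (1 - t)) has_real_derivative y) (at x) \<and> y < 0"
        using L_deriv[of x da db] x u1 assms m0 by auto
    next
      show "continuous_on {t..u} (\<lambda>t. da * ln t + db * ln (1 - t))"
      proof -
        have "t > 0" using assms(3) m0 by linarith
        then show ?thesis using L_cont[OF _ u1] by blast
      qed
    qed
    moreover have "t > 0" "u > 0" "t < 1" using assms(3,4) m0 u1 by linarith+
    ultimately show ?thesis using psi_ln[of t da db] psi_ln[of u da db] u1 by simp
  qed
qed

lemma psi_cont:
  assumes "da > 0" "db > 0"
  shows "continuous_on {0..1} (psi da db)"
  unfolding psi_def using assms by (intro continuous_intros continuous_on_powr') auto



lemma core:
  fixes a1 b1 a2 b2 :: real
  assumes a2: "a2 > 0" and b2: "b2 > 0" and a12: "a1 > a2" and b12: "b1 > b2"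
  defines "G \<equiv> (\<lambda>x. beta_cdf a1 b1 x - beta_cdf a2 b2 x)"
  shows "\<exists>p q. 0 < p \<and> p < q \<and> q < 1 \<and> (\<forall>x\<in>{0<..p}. G x < 0) \<and> (\<forall>x\<in>{q..<1}. G x > 0)
     \<and> (\<forall>x y. p \<le> x \<longrightarrow> x < y \<longrightarrow> y \<le> q \<longrightarrow> G x < G y) \<and> continuous_on {p..q} G"
proof -
  define da where "da = a1 - a2"
  define db where "db = b1 - b2"
  have da: "da > 0" and db: "db > 0" using a12 b12 by (auto simp: da_def db_def)
  have a1: "a1 > 0" and b1: "b1 > 0" using a2 b2 a12 b12 by auto
  define B1 where "B1 = Beta a1 b1"
  define B2 where "B2 = Beta a2 b2"
  have B1: "B1 > 0" using Beta_pos_real[OF a1 b1] by (simp add: B1_def)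
  have B2: "B2 > 0" using Beta_pos_real[OF a2 b2] by (simp add: B2_def)
  define g where "g t = beta_density a1 b1 t - beta_density a2 b2 t" for t
  define \<phi> where "\<phi> t = psi da db t / B1 - 1 / B2" for t
  define w where "w t = t powr (a2 - 1) * (1 - t) powr (b2 - 1)" for t
  have gw: "g t = w t * \<phi> t" if t: "0 < t" "t < 1" for t
  proof -
    have e1: "t powr (a1 - 1) = t powr (a2 - 1) * t powr da"
      by (simp add: da_def powr_add[symmetric])
    have e2: "(1 - t) powr (b1 - 1) = (1 - t) powr (b2 - 1) * (1 - t) powr db"
      by (simp add: db_def powr_add[symmetric])
    show ?thesis using t B1 B2
      unfolding g_def beta_density_def w_def \<phi>_def psi_def B1_def[symmetric] B2_def[symmetric] e1 e2
      by (simp add: field_simps)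
  qed
  have wpos: "w t > 0" if "0 < t" "t < 1" for t using that by (simp add: w_def)
  have g0: "g 0 = 0" and g1: "g 1 = 0" by (simp_all add: g_def beta_density_def)
  have gint: "(g has_integral 0) {0..1}"
    using has_integral_diff[OF dens_int[OF a1 b1] dens_int[OF a2 b2]] by (simp add: g_def[abs_def])
  have gI: "g integrable_on {0..1}" using gint by blast
  have Geq: "G x = integral {0..x} g" if "0 \<le> x" "x \<le> 1" for x
  proof -
    have i1: "beta_density a1 b1 integrable_on {0..x}"
      by (rule integrable_on_subinterval[OF has_integral_integrable[OF dens_int[OF a1 b1]]]) (use that in auto)
    have i2: "beta_density a2 b2 integrable_on {0..x}"
      by (rule integrable_on_subinterval[OF has_integral_integrable[OF dens_int[OF a2 b2]]]) (use that in auto)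
    show ?thesis unfolding G_def g_def
      using cdf_eq[OF a1 b1 that] cdf_eq[OF a2 b2 that] Henstock_Kurzweil_Integration.integral_diff[OF i1 i2]
      by simp
  qed
  have gcont: "continuous_on {c..d} g" if "0 < c" "d < 1" for c d
  proof -
    have "continuous_on {c..d} (\<lambda>t. t powr (a1 - 1) * (1 - t) powr (b1 - 1) / Beta a1 b1
             - t powr (a2 - 1) * (1 - t) powr (b2 - 1) / Beta a2 b2)"
      using that B1 B2 by (intro continuous_intros) (auto simp: B1_def B2_def)
    then show ?thesis
      by (rule continuous_on_cong[THEN iffD1, rotated 2]) (use that in \<open>auto simp: g_def beta_density_def\<close>)
  qed
  have \<phi>cont: "continuous_on {0..1} \<phi>"
    unfolding \<phi>_def using psi_cont[OF da db] B1 by (intro continuous_intros) auto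
  define m where "m = da / (da + db)"
  have m0: "0 < m" and m1: "m < 1" using da db by (auto simp: m_def)
  have \<phi>mono: "\<phi> t < \<phi> u \<longleftrightarrow> psi da db t < psi da db u" for t u
    using B1 by (simp add: \<phi>_def divide_less_cancel)
  have psi01: "psi da db 0 = 0" "psi da db 1 = 0" using da db by (simp_all add: psi_def)
  have \<phi>0: "\<phi> 0 < 0" and \<phi>1: "\<phi> 1 < 0" using psi01 B2 by (simp_all add: \<phi>_def)
  have inc: "\<phi> t < \<phi> u" if "0 \<le> t" "t < u" "u \<le> m" for t u
    using psi_inc[OF da db that(1,2)] that(3) \<phi>mono by (simp add: m_def)
  have dec: "\<phi> u < \<phi> t" if "m \<le> t" "t < u" "u \<le> 1" for t u
    using psi_dec[OF da db _ that(2,3)] that(1) \<phi>mono by (simp add: m_def)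
  have \<phi>m: "\<phi> m > 0"
  proof (rule ccontr)
    assume A: "\<not> \<phi> m > 0"
    have lt: "\<phi> t < \<phi> m" if "0 \<le> t" "t \<le> 1" "t \<noteq> m" for t
    proof (cases "t < m")
      case True then show ?thesis using inc[of t m] that by auto
    next
      case False then show ?thesis using dec[of m t] that by auto
    qed
    have "integral {0..1} g < 0"
    proof (rule integral_neg_strict[OF gI _ _ _ _ gcont])
      show "\<forall>t\<in>{0..1}. g t \<le> 0"
      proof
        fix t :: real assume t: "t \<in> {0..1}"
        show "g t \<le> 0"
        proof (cases "t = 0 \<or> t = 1")
          case True then show ?thesis using g0 g1 by auto
        next
          case False
          then have t01: "0 < t" "t < 1" using t by auto
          have "\<phi> t \<le> 0" using lt[of t] t A by (cases "t = m") auto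
          then show ?thesis using gw[OF t01] wpos[OF t01] by (simp add: mult_nonneg_nonpos)
        qed
      qed
      show "\<forall>t\<in>{m/4..m/2}. g t < 0"
      proof
        fix t :: real assume t: "t \<in> {m/4..m/2}"
        then have t01: "0 < t" "t < 1" using m0 m1 by auto
        have "\<phi> t < 0" using lt[of t] t A m0 m1 by auto
        then show "g t < 0" using gw[OF t01] wpos[OF t01] by (simp add: mult_pos_neg)
      qed
    qed (use m0 m1 in auto)
    then show False using gint by (simp add: integral_unique)
  qed
  obtain p where p: "0 \<le> p" "p \<le> m" "\<phi> p = 0"
    using IVT'[of \<phi> 0 0 m] \<phi>0 \<phi>m m0 continuous_on_subset[OF \<phi>cont, of "{0..m}"] m1 by auto
  obtain q where q: "m \<le> q" "q \<le> 1" "\<phi> q = 0"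
    using IVT2'[of \<phi> 1 0 m] \<phi>1 \<phi>m m1 continuous_on_subset[OF \<phi>cont, of "{m..1}"] m0 by auto
  have p0: "0 < p" "p < m" using p \<phi>0 \<phi>m by (auto simp: order.order_iff_strict)
  have q1: "m < q" "q < 1" using q \<phi>1 \<phi>m by (auto simp: order.order_iff_strict)
  have s1: "\<phi> t < 0" if "0 \<le> t" "t < p" for t using inc[of t p] that p p0 by auto
  have s2: "\<phi> t > 0" if "p < t" "t < q" for t
  proof (cases "t \<le> m")
    case True then show ?thesis using inc[of p t] that p p0 by auto
  next
    case False then show ?thesis using dec[of t q] that q by auto
  qed
  have s3: "\<phi> t < 0" if "q < t" "t \<le> 1" for t using dec[of q t] that q q1 by auto
  have gs1: "g t < 0" if "0 < t" "t < p" for t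
  proof -
    have t01: "0 < t" "t < 1" using that p0 m1 by auto
    show ?thesis using gw[OF t01] wpos[OF t01] s1[of t] that by (simp add: mult_pos_neg)
  qed
  have gn1: "g t \<le> 0" if "0 \<le> t" "t \<le> p" for t
  proof (cases "t = 0")
    case True then show ?thesis using g0 by simp
  next
    case False
    have t01: "0 < t" "t < 1" using that False p0 m1 by auto
    have "\<phi> t \<le> 0" using s1[of t] p that by (cases "t = p") auto
    then show ?thesis using gw[OF t01] wpos[OF t01] by (simp add: mult_nonneg_nonpos)
  qed
  have gs2: "g t > 0" if "p < t" "t < q" for t
  proof -
    have t01: "0 < t" "t < 1" using that p0 q1 by auto
    show ?thesis using gw[OF t01] wpos[OF t01] s2[of t] that by simp
  qed
  have gp: "g t \<ge> 0" if "p \<le> t" "t \<le> q" for t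
  proof -
    have t01: "0 < t" "t < 1" using that p0 q1 by auto
    have "\<phi> t \<ge> 0" using s2[of t] p q that by (cases "t = p \<or> t = q") auto
    then show ?thesis using gw[OF t01] wpos[OF t01] by simp
  qed
  have gs3: "g t < 0" if "q < t" "t < 1" for t
  proof -
    have t01: "0 < t" "t < 1" using that q1 m0 by auto
    show ?thesis using gw[OF t01] wpos[OF t01] s3[of t] that by (simp add: mult_pos_neg)
  qed
  have gn3: "g t \<le> 0" if "q \<le> t" "t \<le> 1" for t
  proof (cases "t = 1")
    case True then show ?thesis using g1 by simp
  next
    case False
    have t01: "0 < t" "t < 1" using that False q1 m0 by auto
    have "\<phi> t \<le> 0" using s3[of t] q that by (cases "t = q") auto
    then show ?thesis using gw[OF t01] wpos[OF t01] by (simp add: mult_nonneg_nonpos)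
  qed
  have gIsub: "g integrable_on {x..y}" if "0 \<le> x" "y \<le> 1" for x y
    by (rule integrable_on_subinterval[OF gI]) (use that in auto)
  have G1: "G 1 = 0" unfolding G_def using cdf_one[OF a1 b1] cdf_one[OF a2 b2] by simp
  have diff: "G y - G x = integral {x..y} g" if "0 \<le> x" "x \<le> y" "y \<le> 1" for x y
    using Geq[of x] Geq[of y] that Henstock_Kurzweil_Integration.integral_combine[where f=g and a=0 and c=x and b=y] gIsub[of 0 y]
    by auto
  show ?thesis
  proof (intro exI conjI allI impI ballI)
    show "0 < p" "p < q" "q < 1" using p0 q1 by auto
  next
    fix x :: real assume x: "x \<in> {0<..p}"
    have "integral {0..x} g < 0"
    proof (rule integral_neg_strict[OF gIsub _ _ _ _ gcont])
      show "\<forall>t\<in>{0..x}. g t \<le> 0" using gn1 x by auto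
      show "\<forall>t\<in>{x/4..x/2}. g t < 0" using gs1 x by auto
    qed (use x p0 q1 m1 in auto)
    then show "G x < 0" using Geq[of x] x p0 q1 m1 by auto
  next
    fix x :: real assume x: "x \<in> {q..<1}"
    have "integral {x..1} g < 0"
    proof (rule integral_neg_strict[OF gIsub _ _ _ _ gcont])
      show "\<forall>t\<in>{x..1}. g t \<le> 0" using gn3 x by auto
      show "\<forall>t\<in>{x + (1 - x)/4..x + (1 - x)/2}. g t < 0" 
      proof
        fix t assume t: "t \<in> {x + (1 - x)/4..x + (1 - x)/2}"
        have "q < t" "t < 1" using t x by (auto simp: field_simps)
        then show "g t < 0" by (rule gs3)
      qed
    qed (use x p0 q1 m1 in \<open>auto simp: field_simps\<close>)
    then show "G x > 0" using diff[of x 1] G1 x p0 q1 m1 by auto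
  next
    fix x y :: real assume xy: "p \<le> x" "x < y" "y \<le> q"
    have "integral {x..y} g > 0"
    proof (rule integral_pos_strict[OF gIsub _ _ _ _ gcont])
      show "\<forall>t\<in>{x..y}. g t \<ge> 0" using gp xy by auto
      show "\<forall>t\<in>{x + (y - x)/4..x + (y - x)/2}. g t > 0" 
      proof
        fix t assume t: "t \<in> {x + (y - x)/4..x + (y - x)/2}"
        have "p < t" "t < q" using t xy by (auto simp: field_simps)
        then show "g t > 0" by (rule gs2)
      qed
    qed (use xy p0 q1 m1 in \<open>auto simp: field_simps\<close>)
    then show "G x < G y" using diff[of x y] xy p0 q1 m1 by auto
  next
    have "continuous_on {0..1} (\<lambda>x. integral {0..x} g)"
      by (rule indefinite_integral_continuous_1[OF gI])
    then have "continuous_on {p..q} (\<lambda>x. integral {0..x} g)"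
      by (rule continuous_on_subset) (use p0 q1 in auto)
    then show "continuous_on {p..q} G"
      by (rule continuous_on_cong[THEN iffD1, rotated 2]) (use Geq p0 q1 in auto)
  qed
qed



lemma abstract_sign:
  fixes G :: "real \<Rightarrow> real"
  assumes pq: "0 < p" "p < q" "q < 1"
    and neg: "\<forall>x\<in>{0<..p}. G x < 0" and pos: "\<forall>x\<in>{q..<1}. G x > 0"
    and mono: "\<forall>x y. p \<le> x \<longrightarrow> x < y \<longrightarrow> y \<le> q \<longrightarrow> G x < G y"
    and cont: "continuous_on {p..q} G"
  shows "(\<exists>!xc. xc \<in> {0<..<1} \<and> G xc = 0) \<and>
     (\<forall>xc. xc \<in> {0<..<1} \<and> G xc = 0 \<longrightarrow> (\<forall>x\<in>{0<..<xc}. G x < 0) \<and> (\<forall>x\<in>{xc<..<1}. G x > 0))"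
proof -
  have Gp: "G p < 0" using neg pq by auto
  have Gq: "G q > 0" using pos pq by auto
  obtain xc where xc: "p \<le> xc" "xc \<le> q" "G xc = 0"
    using IVT'[of G p 0 q] Gp Gq pq cont by auto
  have zc: "p < x \<and> x < q" if "x \<in> {0<..<1}" "G x = 0" for x
  proof -
    have "\<not> x \<le> p" using neg that by force
    moreover have "\<not> x \<ge> q" using pos that by force
    ultimately show ?thesis by auto
  qed
  have ex: "xc \<in> {0<..<1} \<and> G xc = 0" using xc pq by auto
  have uniq: "y = xc" if "y \<in> {0<..<1} \<and> G y = 0" for y
  proof -
    have a: "p < y" "y < q" using zc that by auto
    have b: "p < xc" "xc < q" using zc ex by auto
    show ?thesis
    proof (rule ccontr)
      assume "y \<noteq> xc"
      then have "y < xc \<or> xc < y" by auto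
      then show False using mono a b that xc by (metis less_le less_irrefl)
    qed
  qed
  show ?thesis
  proof (intro conjI allI impI ballI)
    show "\<exists>!xc. xc \<in> {0<..<1} \<and> G xc = 0" using ex uniq by blast
  next
    fix z x assume z: "z \<in> {0<..<1} \<and> G z = 0" and x: "x \<in> {0<..<z}"
    have zz: "p < z" "z < q" using zc z by auto
    show "G x < 0"
    proof (cases "x \<le> p")
      case True then show ?thesis using neg x by auto
    next
      case False then show ?thesis using mono[rule_format, of x z] zz x z by auto
    qed
  next
    fix z x assume z: "z \<in> {0<..<1} \<and> G z = 0" and x: "x \<in> {z<..<1}"
    have zz: "p < z" "z < q" using zc z by auto
    show "G x > 0"
    proof (cases "x \<ge> q")
      case True then show ?thesis using pos x by auto
    next
      case False then show ?thesis using mono[rule_format, of z x] zz x z by auto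
    qed
  qed
qed

lemma params:
  fixes M V1 V2 :: real
  assumes "0 < M" "M < 1" "0 < V1" "V1 < V2" "V2 < M - M\<^sup>2"
  shows "beta_alpha M V2 > 0" "beta_beta M V2 > 0"
    "beta_alpha M V1 > beta_alpha M V2" "beta_beta M V1 > beta_beta M V2"
proof -
  define K where "K = M - M\<^sup>2"
  have K: "K > 0" using assms by (simp add: K_def)
  have e: "(K - V) / V = K / V - 1" if "V > 0" for V using that by (simp add: field_simps)
  have "K / V1 > K / V2" using K assms by (intro divide_strict_left_mono) auto
  then have lt: "(K - V1) / V1 > (K - V2) / V2" using e[of V1] e[of V2] assms by simp
  have p2: "(K - V2) / V2 > 0" using assms by (simp add: K_def)
  have ea: "beta_alpha M V = M * ((K - V) / V)" for V by (simp add: beta_alpha_def K_def)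
  have eb: "beta_beta M V = (1 - M) * ((K - V) / V)" for V by (simp add: beta_beta_def K_def)
  have M1: "1 - M > 0" using assms by simp
  show "beta_alpha M V2 > 0" unfolding ea by (rule mult_pos_pos[OF assms(1) p2])
  show "beta_beta M V2 > 0" unfolding eb by (rule mult_pos_pos[OF M1 p2])
  show "beta_alpha M V1 > beta_alpha M V2" unfolding ea by (rule mult_strict_left_mono[OF lt assms(1)])
  show "beta_beta M V1 > beta_beta M V2" unfolding eb by (rule mult_strict_left_mono[OF lt M1])
qed

theorem proposition5:
  fixes M V1 V2 :: real
  assumes "0 < M" "M < 1"
    and "0 < V1" "V1 < M - M\<^sup>2"
    and "0 < V2" "V2 < M - M\<^sup>2"
    and "V1 \<noteq> V2"
  shows "(\<exists>!xc. xc \<in> {0<..<1} \<and> F_MV M V1 xc = F_MV M V2 xc) \<and>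
         (V1 < V2 \<longrightarrow>
           (\<forall>xc. xc \<in> {0<..<1} \<and> F_MV M V1 xc = F_MV M V2 xc \<longrightarrow>
             (\<forall>x\<in>{0<..<xc}. F_MV M V1 x < F_MV M V2 x) \<and>
             (\<forall>x\<in>{xc<..<1}. F_MV M V2 x < F_MV M V1 x)))"
proof (cases "V1 < V2")
  case True
  note pr = params[OF assms(1,2,3) True assms(6)]
  obtain p q where pq: "0 < p \<and> p < q \<and> q < 1 \<and> (\<forall>x\<in>{0<..p}. F_MV M V1 x - F_MV M V2 x < 0)
     \<and> (\<forall>x\<in>{q..<1}. F_MV M V1 x - F_MV M V2 x > 0)
     \<and> (\<forall>x y. p \<le> x \<longrightarrow> x < y \<longrightarrow> y \<le> q \<longrightarrow> F_MV M V1 x - F_MV M V2 x < F_MV M V1 y - F_MV M V2 y)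
     \<and> continuous_on {p..q} (\<lambda>x. F_MV M V1 x - F_MV M V2 x)"
    using core[OF pr] unfolding F_MV_def by blast
  have R: "(\<exists>!xc. xc \<in> {0<..<1} \<and> F_MV M V1 xc - F_MV M V2 xc = 0) \<and>
     (\<forall>xc. xc \<in> {0<..<1} \<and> F_MV M V1 xc - F_MV M V2 xc = 0 \<longrightarrow>
        (\<forall>x\<in>{0<..<xc}. F_MV M V1 x - F_MV M V2 x < 0) \<and> (\<forall>x\<in>{xc<..<1}. F_MV M V1 x - F_MV M V2 x > 0))"
    using pq by (intro abstract_sign) auto
  then show ?thesis by simp
next
  case False
  then have lt: "V2 < V1" using assms(7) by auto
  note pr = params[OF assms(1,2,5) lt assms(4)]
  obtain p q where pq: "0 < p \<and> p < q \<and> q < 1 \<and> (\<forall>x\<in>{0<..p}. F_MV M V2 x - F_MV M V1 x < 0)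
     \<and> (\<forall>x\<in>{q..<1}. F_MV M V2 x - F_MV M V1 x > 0)
     \<and> (\<forall>x y. p \<le> x \<longrightarrow> x < y \<longrightarrow> y \<le> q \<longrightarrow> F_MV M V2 x - F_MV M V1 x < F_MV M V2 y - F_MV M V1 y)
     \<and> continuous_on {p..q} (\<lambda>x. F_MV M V2 x - F_MV M V1 x)"
    using core[OF pr] unfolding F_MV_def by blast
  have R: "\<exists>!xc. xc \<in> {0<..<1} \<and> F_MV M V2 xc - F_MV M V1 xc = 0"
    using abstract_sign[of p q "\<lambda>x. F_MV M V2 x - F_MV M V1 x"] pq by auto
  have eq: "(\<lambda>xc. xc \<in> {0<..<1} \<and> F_MV M V2 xc - F_MV M V1 xc = 0) = (\<lambda>xc. xc \<in> {0<..<1} \<and> F_MV M V1 xc = F_MV M V2 xc)"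
    by (auto simp: fun_eq_iff)
  show ?thesis using R False unfolding eq by simp
qed


end
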